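(* Let $(\vartheta,\mathbb{P})$ be an arbitrary mutation law over $\mathcal{A}=\{a_0,\dots,a_{d-1}\}$, let $k\in\mathbb{N}$, and let $w$ be a word with $|w|\ge k$. Then \[\mathbb{E}\big[\mathbf{ct}^{(k)}_{\vartheta(w)}\big]=\frac{1}{|w|}\Big(\mathbf{M}^{(k)}+(|w|-k)\mathbf{I}\Big)\cdot\mathbf{ct}^{(k)}_w,\] where $\vartheta(w)$ is the result of a single mutation step applied to $w$.
   Context: Let $\mathcal{A}=\{a_0,\dots,a_{d-1}\}$ be a finite alphabet and $\mathcal{A}^\star$ the set of finite nonempty words. A mutation law assigns to each $a_t$ a finitely supported probability distribution $\mathbb{P}_{a_t}$ on $\mathcal{A}^\star$; $\vartheta(a_t)$ denotes a random word with law $\mathbb{P}_{a_t}$. A mutation step applied to $w=w_0\cdots w_{m-1}$ chooses $i\in\{0,\dots,m-1\}$ uniformly at random and replaces $w_i$ by an independent random word with law $\mathbb{P}_{w_i}$, giving $\vartheta(w)$. For words $u,v$ with $|u|\le|v|$, $\mathrm{ct}_v(u)$ is the number of $i\in\{0,\dots,|v|-1\}$ with $v_i\cdots v_{i+|u|-1}=u$, indices cyclic modulo $|v|$; $\mathbf{ct}^{(k)}_v=(\mathrm{ct}_v(u))_{u\in\mathcal{A}^k}\in\mathbb{R}^{d^k}$. The $k$-substitution matrix $\mathbf{M}^{(k)}$ is the $d^k\times d^k$ matrix indexed by $\mathcal{A}^k$ with, for $u,v\in\mathcal{A}^k$, $v=v_0\cdots v_{k-1}$, \[\mathbf{M}^{(k)}_{u,v}=\sum_{l\ge1}\sum_{\eta\in\mathcal{A}^l}\sum_{t\in[d]}\Pr(\vartheta(a_t)=\eta)\Big(\sum_{j=1}^{k-1}\mathbb{1}[v_j=a_t]\,\mathbb{1}\big[(v_0\cdots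 v_{j-1}\,\eta\,v_{j+1}\cdots v_{k-1})_{[k]}=u\big]+\sum_{j=0}^{l-1}\mathbb{1}[v_0=a_t]\,\mathbb{1}\big[(\eta\,v_1\cdots v_{k-1})_{j+[k]}=u\big]\Big),\] where for a word $x$, $x_{j+[k]}=x_jx_{j+1}\cdots x_{j+k-1}$ and $x_{[k]}$ is its first $k$ symbols. *)

theory Defs
  imports "HOL-Probability.Probability"
begin

definition mutation_law :: "('a \<Rightarrow> 'a list pmf) \<Rightarrow> bool" where
  "mutation_law P \<longleftrightarrow> (\<forall>a. finite (set_pmf (P a)) \<and> [] \<notin> set_pmf (P a))"

definition mutate :: "('a \<Rightarrow> 'a list pmf) \<Rightarrow> 'a list \<Rightarrow> 'a list pmf" where
  "mutate P w =
     do { i \<leftarrow> pmf_of_set {0..<length w};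
          \<eta> \<leftarrow> P (w ! i);
          return_pmf (take i w @ \<eta> @ drop (Suc i) w) }"

definition ct :: "'a list \<Rightarrow> 'a list \<Rightarrow> nat" where
  "ct v u = card {i. i < length v \<and> (\<forall>m < length u. v ! ((i + m) mod length v) = u ! m)}"

definition words :: "nat \<Rightarrow> 'a list set" where
  "words k = {v. length v = k}"

text \<open>The k-substitution matrix M^(k), entry (u,v). Summing over all words \<eta>
weighted by their probability equals summing over the (finite) support.\<close>
definition subst_matrix :: "('a::finite \<Rightarrow> 'a list pmf) \<Rightarrow> nat \<Rightarrow> 'a list \<Rightarrow> 'a list \<Rightarrow> real" where
  "subst_matrix P k u v =
     (\<Sum>t\<in>UNIV. \<Sum>\<eta>\<in>set_pmf (P t). pmf (P t) \<eta> *
        ( (\<Sum>j\<in>{1..k-1}. (if v ! j = t \<and> take k (take j v @ \<eta> @ drop (Suc j) v) = u then 1 else 0))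
        + (\<Sum>j\<in>{0..<length \<eta>}. (if v ! 0 = t \<and> take k (drop j (\<eta> @ drop 1 v)) = u then 1 else 0))))"

end

theory Submission imports Defs begin

definition cw :: "nat \<Rightarrow> 'a list \<Rightarrow> nat \<Rightarrow> 'a list" where
  "cw k v s = take k (drop s (v @ v))"

lemma cw_length: "s < length v \<Longrightarrow> k \<le> length v \<Longrightarrow> length (cw k v s) = k"
  by (simp add: cw_def)

lemma cw_nth: "s < length v \<Longrightarrow> k \<le> length v \<Longrightarrow> q < k \<Longrightarrow> cw k v s ! q = v ! ((s + q) mod length v)"
proof -
  assume h: "s < length v" "k \<le> length v" "q < k"
  have "cw k v s ! q = (v @ v) ! (s + q)" using h by (simp add: cw_def nth_take nth_drop del: drop_append take_append)
  also have "\<dots> = v ! ((s + q) mod length v)"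
  proof (cases "s + q < length v")
    case True thus ?thesis by (simp add: nth_append)
  next
    case False
    hence "(s + q) mod length v = (s + q - length v) mod length v" using h
      by (simp add: le_mod_geq)
    also have "\<dots> = s + q - length v" using h False by simp
    finally have "(s + q) mod length v = s + q - length v" .
    thus ?thesis using False by (simp add: nth_append)
  qed
  finally show ?thesis .
qed

lemma ct_cw: assumes "length u \<le> length v"
  shows "ct v u = card {i. i < length v \<and> cw (length u) v i = u}"
  unfolding ct_def
proof (rule arg_cong[where f=card], rule Collect_cong)
  fix i show "(i < length v \<and> (\<forall>m<length u. v ! ((i + m) mod length v) = u ! m)) =
         (i < length v \<and> cw (length u) v i = u)"
    using assms by (auto simp: list_eq_iff_nth_eq cw_length cw_nth)
qed

lemma ct_sum: assumes "length u \<le> length v"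
  shows "real (ct v u) = (\<Sum>i<length v. of_bool (cw (length u) v i = u))"
proof -
  have e: "{..<length v} \<inter> {i. cw (length u) v i = u} = {i. i < length v \<and> cw (length u) v i = u}" by auto
  have "(\<Sum>i<length v. of_bool (cw (length u) v i = u)) = (of_nat (card ({..<length v} \<inter> {i. cw (length u) v i = u})) :: real)"
    by simp
  also have "\<dots> = real (ct v u)" by (simp only: e ct_cw[OF assms])
  finally show ?thesis by (rule sym)
qed

lemma cw_rotate: assumes "s < length v" "k \<le> length v"
  shows "cw k (rotate r v) s = cw k v ((s + r) mod length v)"
proof (rule nth_equalityI)
  have L: "0 < length v" using assms by auto
  hence s': "(s + r) mod length v < length v" by simp
  show "length (cw k (rotate r v) s) = length (cw k v ((s + r) mod length v))"
    using assms s' by (simp add: cw_length)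
  fix q assume "q < length (cw k (rotate r v) s)"
  hence q: "q < k" using assms by (simp add: cw_length)
  have "cw k (rotate r v) s ! q = rotate r v ! ((s + q) mod length v)"
    using assms q by (simp add: cw_nth)
  also have "\<dots> = v ! ((r + (s + q) mod length v) mod length v)"
    using L by (simp add: nth_rotate)
  also have "(r + (s + q) mod length v) mod length v = (r + (s + q)) mod length v"
    by (rule mod_add_right_eq)
  also have "r + (s + q) = (s + r) + q" by simp
  also have "((s + r) + q) mod length v = ((s + r) mod length v + q) mod length v"
    by (rule mod_add_left_eq[symmetric])
  also have "v ! \<dots> = cw k v ((s + r) mod length v) ! q"
    using assms q s' by (simp add: cw_nth)
  finally show "cw k (rotate r v) s ! q = cw k v ((s + r) mod length v) ! q" .
qed

lemma inj_mod_shift_aux: "(i + c) mod n = (j + c) mod (n::nat) \<Longrightarrow> i \<le> j \<Longrightarrow> j < n \<Longrightarrow> i = j"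
proof -
  assume a: "(i + c) mod n = (j + c) mod (n::nat)" "i \<le> j" "j < n"
  have "n dvd (j + c) - (i + c)" using a mod_eq_dvd_iff_nat[of "i+c" "j+c" n] by auto
  hence "n dvd j - i" by simp
  moreover have "j - i < n" using a by auto
  ultimately have "j - i = 0" using dvd_imp_le by (metis gr0I leD)
  thus ?thesis using a by auto
qed

lemma inj_mod_shift: "inj_on (\<lambda>i. (i + c) mod n) {..<(n::nat)}"
proof (rule inj_onI)
  fix i j assume h: "i \<in> {..<n}" "j \<in> {..<n}" "(i + c) mod n = (j + c) mod n"
  show "i = j"
  proof (cases "i \<le> j")
    case True thus ?thesis using h inj_mod_shift_aux[of i c n j] by auto
  next
    case False thus ?thesis using h inj_mod_shift_aux[of j c n i] by auto
  qed
qed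

lemma sum_mod_shift: "0 < n \<Longrightarrow> (\<Sum>i<n. g ((i + c) mod n)) = (\<Sum>i<(n::nat). g i)"
proof -
  assume n: "0 < n"
  have "(\<lambda>i. (i + c) mod n) ` {..<n} = {..<n}"
    by (rule endo_inj_surj) (simp_all add: inj_mod_shift n image_subset_iff)
  hence "(\<Sum>i<n. g i) = (\<Sum>i<n. g ((i + c) mod n))"
    using sum.reindex[OF inj_mod_shift, of g c n] by simp
  thus ?thesis by simp
qed

definition T :: "nat \<Rightarrow> 'a list \<Rightarrow> nat \<Rightarrow> 'a list \<Rightarrow> 'a list \<Rightarrow> real" where
  "T k u j v \<eta> = (if j = 0 then (\<Sum>j'\<in>{0..<length \<eta>}. (if take k (drop j' (\<eta> @ drop 1 v)) = u then 1 else 0))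
     else (if take k (take j v @ \<eta> @ drop (Suc j) v) = u then 1 else 0))"

lemma T0: "T k u 0 v \<eta> = (\<Sum>j'\<in>{0..<length \<eta>}. (if take k (drop j' (\<eta> @ drop 1 v)) = u then 1 else 0))"
  unfolding T_def by (rule if_P) (rule refl)

lemma drop1_take_Cons: "0 < n \<Longrightarrow> drop (Suc 0) (take n (a # xs)) = take (n - 1) xs"
  by (cases n) auto

lemma P1: assumes "p + k \<le> length w0"
  shows "cw k (w0 @ \<eta>) p = cw k (w0 @ [a]) p"
  using assms by (simp add: cw_def)

lemma P2: assumes "1 \<le> j" "j < k" "k \<le> Suc (length w0)" "\<eta> \<noteq> []"
  shows "cw k (w0 @ \<eta>) (length w0 - j) =
     take k (take j (cw k (w0 @ [a]) (length w0 - j)) @ \<eta> @ drop (Suc j) (cw k (w0 @ [a]) (length w0 - j)))"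
proof -
  have "0 < length \<eta>" using assms by simp
  hence "k - (j + length \<eta>) \<le> k - Suc j" by linarith
  thus ?thesis using assms by (simp add: cw_def min_def drop1_take_Cons)
qed

lemma P3: assumes "j < length \<eta>" "1 \<le> k" "k \<le> Suc (length w0)"
  shows "cw k (w0 @ \<eta>) (length w0 + j) = take k (drop j (\<eta> @ drop 1 (cw k (w0 @ [a]) (length w0))))"
  using assms by (simp add: cw_def min_def drop1_take_Cons)

lemma special:
  assumes eta: "\<eta> \<noteq> []" and k1: "1 \<le> k" and km: "k \<le> Suc (length w0)" and lu: "length u = k"
  shows "real (ct (w0 @ \<eta>) u) = (\<Sum>s<Suc (length w0) - k. of_bool (cw k (w0 @ [a]) s = u))
           + (\<Sum>j<k. T k u j (cw k (w0 @ [a]) (length w0 - j)) \<eta>)"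
proof -
  define m where "m = length w0"
  define l where "l = length \<eta>"
  define W where "W = w0 @ [a]"
  define f where "f p = (of_bool (cw k (w0 @ \<eta>) p = u) :: real)" for p
  have l1: "1 \<le> l" using eta by (simp add: l_def Suc_le_eq)
  have "real (ct (w0 @ \<eta>) u) = (\<Sum>p<m + l. f p)"
    using ct_sum[of u "w0 @ \<eta>"] lu km l1 by (simp add: f_def m_def l_def)
  also have "\<dots> = (\<Sum>p\<in>{0..<Suc m - k}. f p) + (\<Sum>p\<in>{Suc m - k..<m}. f p) + (\<Sum>p\<in>{m..<m + l}. f p)"
    using k1 km l1 unfolding m_def
    by (simp add: sum.atLeastLessThan_concat atLeast0LessThan[symmetric])
  also have "(\<Sum>p\<in>{0..<Suc m - k}. f p) = (\<Sum>s<Suc m - k. of_bool (cw k W s = u))"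
    unfolding atLeast0LessThan
  proof (rule sum.cong[OF refl])
    fix p assume "p \<in> {..<Suc m - k}"
    hence "p + k \<le> length w0" using k1 km by (simp add: m_def)
    thus "f p = of_bool (cw k W p = u)" using P1[of p k w0 \<eta> a] by (simp add: f_def W_def)
  qed
  also have "(\<Sum>p\<in>{Suc m - k..<m}. f p) = (\<Sum>j\<in>{1..<k}. T k u j (cw k W (m - j)) \<eta>)"
  proof (rule sum.reindex_bij_witness[of _ "\<lambda>j. m - j" "\<lambda>p. m - p"])
    fix p assume p: "p \<in> {Suc m - k..<m}"
    define j where "j = m - p"
    have jj: "1 \<le> j" "j < k" using p k1 km by (auto simp: j_def)
    have pj: "p = m - j" using p by (auto simp: j_def)
    have "cw k (w0 @ \<eta>) (m - j) =
       take k (take j (cw k W (m - j)) @ \<eta> @ drop (Suc j) (cw k W (m - j)))"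
      using P2[OF jj km eta, of a] by (simp add: m_def W_def)
    thus "T k u (m - p) (cw k W (m - (m - p))) \<eta> = f p" using jj
      unfolding pj[symmetric] j_def[symmetric] by (simp add: f_def T_def)
  qed (use k1 km in \<open>auto simp: m_def\<close>)
  also have "(\<Sum>p\<in>{m..<m + l}. f p) = T k u 0 (cw k W (m - 0)) \<eta>"
  proof -
    have "(\<Sum>p\<in>{m..<m + l}. f p) = (\<Sum>j\<in>{0..<l}. f (j + m))"
      using sum.shift_bounds_nat_ivl[of f 0 m l] by (simp add: add.commute)
    also have "\<dots> = T k u 0 (cw k W (m - 0)) \<eta>"
      unfolding diff_zero T0 l_def
    proof (rule sum.cong[OF refl])
      fix j assume "j \<in> {0..<length \<eta>}"
      hence "j < length \<eta>" by simp
      thus "f (j + m) = (if take k (drop j (\<eta> @ drop 1 (cw k W m))) = u then 1 else 0)"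
        using P3[of j \<eta> k w0 a] k1 km by (simp add: f_def W_def m_def add.commute)
    qed
    finally show ?thesis .
  qed
  also have "(\<Sum>j<k. T k u j (cw k W (m - j)) \<eta>) = T k u 0 (cw k W (m - 0)) \<eta> + (\<Sum>j\<in>{1..<k}. T k u j (cw k W (m - j)) \<eta>)"
  proof -
    have "{..<k} = insert 0 {1..<k}" using k1 by auto
    thus ?thesis by simp
  qed
  ultimately show ?thesis by (simp add: m_def W_def)
qed

lemma ct_rotate: assumes "length u \<le> length v" "0 < length v"
  shows "ct (rotate r v) u = ct v u"
proof -
  have "real (ct (rotate r v) u) = (\<Sum>i<length v. of_bool (cw (length u) (rotate r v) i = u))"
    using ct_sum[of u "rotate r v"] assms by simp
  also have "\<dots> = (\<Sum>i<length v. of_bool (cw (length u) v ((i + r) mod length v) = u))"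
    by (rule sum.cong[OF refl]) (use assms in \<open>simp add: cw_rotate\<close>)
  also have "\<dots> = (\<Sum>i<length v. of_bool (cw (length u) v i = u))"
    by (rule sum_mod_shift[OF assms(2)])
  also have "\<dots> = real (ct v u)" using ct_sum[of u v] assms by simp
  finally show ?thesis by simp
qed

lemma per_i:
  assumes i: "i < length w" and eta: "\<eta> \<noteq> []" and k1: "1 \<le> k" and kn: "k \<le> length w" and lu: "length u = k"
  shows "real (ct (take i w @ \<eta> @ drop (Suc i) w) u) =
     (\<Sum>s<length w - k. of_bool (cw k w ((s + Suc i) mod length w) = u))
     + (\<Sum>j<k. T k u j (cw k w ((i + length w - j) mod length w)) \<eta>)"
proof -
  define n where "n = length w"
  define w0 where "w0 = drop (Suc i) w @ take i w"
  define a where "a = w ! i"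
  have lw0: "length w0 = n - 1" using i by (simp add: w0_def n_def)
  have rotw: "rotate (Suc i) w = w0 @ [a]"
  proof -
    have "rotate (Suc i) w = rotate (length (take (Suc i) w)) (take (Suc i) w @ drop (Suc i) w)"
      using i by simp
    also have "\<dots> = drop (Suc i) w @ take (Suc i) w" by (rule rotate_append)
    finally show ?thesis using i by (simp add: w0_def a_def take_Suc_conv_app_nth)
  qed
  have rotx: "rotate (length (take i w @ \<eta>)) (take i w @ \<eta> @ drop (Suc i) w) = w0 @ \<eta>"
    using rotate_append[of "take i w @ \<eta>" "drop (Suc i) w"] by (simp add: w0_def)
  have "ct (take i w @ \<eta> @ drop (Suc i) w) u = ct (w0 @ \<eta>) u"
  proof -
    have le: "0 < length \<eta>" using eta by simp
    have "k \<le> length \<eta> + length w - Suc 0" using le kn by linarith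
    hence l1: "length u \<le> length (take i w @ \<eta> @ drop (Suc i) w)" using lu kn i by simp
    have l2: "0 < length (take i w @ \<eta> @ drop (Suc i) w)" using le by simp
    show ?thesis using ct_rotate[OF l1 l2, of "length (take i w @ \<eta>)"] rotx by simp
  qed
  hence "real (ct (take i w @ \<eta> @ drop (Suc i) w) u) =
     (\<Sum>s<Suc (length w0) - k. of_bool (cw k (w0 @ [a]) s = u))
           + (\<Sum>j<k. T k u j (cw k (w0 @ [a]) (length w0 - j)) \<eta>)"
    using special[OF eta k1, of w0 u a] kn lu lw0 i by (simp add: n_def)
  also have "(\<Sum>s<Suc (length w0) - k. of_bool (cw k (w0 @ [a]) s = u) :: real) =
     (\<Sum>s<length w - k. of_bool (cw k w ((s + Suc i) mod length w) = u))"
  proof (rule sum.cong)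
    show "{..<Suc (length w0) - k} = {..<length w - k}" using lw0 i by (simp add: n_def)
    fix s assume "s \<in> {..<length w - k}"
    hence "s < length w" by auto
    thus "(of_bool (cw k (w0 @ [a]) s = u) :: real) = of_bool (cw k w ((s + Suc i) mod length w) = u)"
      using cw_rotate[of s w k "Suc i"] kn rotw by simp
  qed
  also have "(\<Sum>j<k. T k u j (cw k (w0 @ [a]) (length w0 - j)) \<eta>) =
      (\<Sum>j<k. T k u j (cw k w ((i + length w - j) mod length w)) \<eta>)"
  proof (rule sum.cong[OF refl])
    fix j assume "j \<in> {..<k}"
    hence j: "j < k" by auto
    have "cw k (w0 @ [a]) (length w0 - j) = cw k w ((length w0 - j + Suc i) mod length w)"
      using cw_rotate[of "length w0 - j" w k "Suc i"] kn rotw lw0 i by (simp add: n_def)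
    also have "length w0 - j + Suc i = i + length w - j" using lw0 j kn i by (simp add: n_def)
    finally show "T k u j (cw k (w0 @ [a]) (length w0 - j)) \<eta> = T k u j (cw k w ((i + length w - j) mod length w)) \<eta>"
      by simp
  qed
  finally show ?thesis .
qed

lemma M_eq:
  fixes P :: "'a::finite \<Rightarrow> 'a list pmf"
  assumes k1: "1 \<le> k"
  shows "subst_matrix P k u v = (\<Sum>j<k. \<Sum>\<eta>\<in>set_pmf (P (v ! j)). pmf (P (v ! j)) \<eta> * T k u j v \<eta>)"
proof -
  define F where "F j t = (\<Sum>\<eta>\<in>set_pmf (P t). pmf (P t) \<eta> * T k u j v \<eta>)" for j t
  have ins: "{..<k} = insert 0 {1..<k}" using k1 by auto
  have inner: "((\<Sum>j\<in>{1..k-1}. (if v ! j = t \<and> take k (take j v @ \<eta> @ drop (Suc j) v) = u then 1 else 0))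
        + (\<Sum>j\<in>{0..<length \<eta>}. (if v ! 0 = t \<and> take k (drop j (\<eta> @ drop 1 v)) = u then 1 else 0)))
     = (\<Sum>j<k. if v ! j = t then T k u j v \<eta> else 0)" for t \<eta>
  proof -
    have e1: "{1..k-1} = {1..<k}" using k1 by auto
    have "(\<Sum>j\<in>{1..k-1}. (if v ! j = t \<and> take k (take j v @ \<eta> @ drop (Suc j) v) = u then 1 else 0))
        = (\<Sum>j\<in>{1..<k}. if v ! j = t then T k u j v \<eta> else (0::real))"
      unfolding e1 by (rule sum.cong[OF refl]) (auto simp: T_def)
    moreover have "(\<Sum>j\<in>{0..<length \<eta>}. (if v ! 0 = t \<and> take k (drop j (\<eta> @ drop 1 v)) = u then 1 else (0::real)))
        = (if v ! 0 = t then T k u 0 v \<eta> else 0)"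
      unfolding T0 by auto
    ultimately show ?thesis unfolding ins by simp
  qed
  have "subst_matrix P k u v = (\<Sum>t\<in>UNIV. \<Sum>\<eta>\<in>set_pmf (P t). pmf (P t) \<eta> * (\<Sum>j<k. if v ! j = t then T k u j v \<eta> else 0))"
    unfolding subst_matrix_def inner by (rule refl)
  also have "\<dots> = (\<Sum>t\<in>UNIV. \<Sum>j<k. if v ! j = t then F j t else 0)"
  proof (rule sum.cong[OF refl])
    fix t
    have "(\<Sum>\<eta>\<in>set_pmf (P t). pmf (P t) \<eta> * (\<Sum>j<k. if v ! j = t then T k u j v \<eta> else 0))
       = (\<Sum>\<eta>\<in>set_pmf (P t). \<Sum>j<k. if v ! j = t then pmf (P t) \<eta> * T k u j v \<eta> else 0)"
      by (simp add: sum_distrib_left if_distrib cong: if_cong)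
    also have "\<dots> = (\<Sum>j<k. \<Sum>\<eta>\<in>set_pmf (P t). if v ! j = t then pmf (P t) \<eta> * T k u j v \<eta> else 0)"
      by (rule sum.swap)
    also have "\<dots> = (\<Sum>j<k. if v ! j = t then F j t else 0)"
      by (rule sum.cong[OF refl]) (simp add: F_def)
    finally show "(\<Sum>\<eta>\<in>set_pmf (P t). pmf (P t) \<eta> * (\<Sum>j<k. if v ! j = t then T k u j v \<eta> else 0))
       = (\<Sum>j<k. if v ! j = t then F j t else 0)" .
  qed
  also have "\<dots> = (\<Sum>j<k. \<Sum>t\<in>UNIV. if v ! j = t then F j t else 0)"
    by (rule sum.swap)
  also have "\<dots> = (\<Sum>j<k. F j (v ! j))" by simp
  finally show ?thesis by (simp add: F_def)
qed

lemma expect: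
  assumes ml: "mutation_law P" and n: "0 < length w"
  shows "measure_pmf.expectation (mutate P w) f =
    (\<Sum>i\<in>{0..<length w}. (\<Sum>\<eta>\<in>set_pmf (P (w ! i)). pmf (P (w ! i)) \<eta> * f (take i w @ \<eta> @ drop (Suc i) w)) / real (length w))"
proof -
  have fin: "finite (set_pmf (P a))" for a using ml by (simp add: mutation_law_def)
  have "measure_pmf.expectation (mutate P w) f =
     (\<Sum>i\<in>{0..<length w}. measure_pmf.expectation (P (w ! i) \<bind> (\<lambda>\<eta>. return_pmf (take i w @ \<eta> @ drop (Suc i) w))) f /\<^sub>R real (card {0..<length w}))"
    unfolding mutate_def
    by (rule pmf_expectation_bind_pmf_of_set) (use n fin in \<open>auto simp: set_bind_pmf\<close>)
  also have "\<dots> = (\<Sum>i\<in>{0..<length w}. (\<Sum>\<eta>\<in>set_pmf (P (w ! i)). pmf (P (w ! i)) \<eta> * f (take i w @ \<eta> @ drop (Suc i) w)) / real (length w))"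
  proof (rule sum.cong[OF refl])
    fix i
    have "measure_pmf.expectation (P (w ! i) \<bind> (\<lambda>\<eta>. return_pmf (take i w @ \<eta> @ drop (Suc i) w))) f
       = (\<Sum>\<eta>\<in>set_pmf (P (w ! i)). pmf (P (w ! i)) \<eta> *\<^sub>R measure_pmf.expectation (return_pmf (take i w @ \<eta> @ drop (Suc i) w)) f)"
      by (rule pmf_expectation_bind) (auto simp: fin)
    thus "measure_pmf.expectation (P (w ! i) \<bind> (\<lambda>\<eta>. return_pmf (take i w @ \<eta> @ drop (Suc i) w))) f /\<^sub>R real (card {0..<length w})
       = (\<Sum>\<eta>\<in>set_pmf (P (w ! i)). pmf (P (w ! i)) \<eta> * f (take i w @ \<eta> @ drop (Suc i) w)) / real (length w)"
      by (simp add: divide_inverse_commute)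
  qed
  finally show ?thesis .
qed

lemma cw_off: assumes "j < k" "i < length w" "k \<le> length w"
  shows "cw k w ((i + length w - j) mod length w) ! j = w ! i"
proof -
  have "cw k w ((i + length w - j) mod length w) ! j = w ! (((i + length w - j) mod length w + j) mod length w)"
  proof (rule cw_nth)
    have "0 < length w" using assms by linarith
    thus "(i + length w - j) mod length w < length w" by simp
  qed (use assms in auto)
  also have "((i + length w - j) mod length w + j) mod length w = ((i + length w - j) + j) mod length w"
    by (rule mod_add_left_eq)
  also have "(i + length w - j) + j = i + length w" using assms by simp
  also have "(i + length w) mod length w = i" using assms by simp
  finally show ?thesis .
qed

lemma finite_words: "finite (words k :: ('a::finite) list set)"
proof -
  have "words k = {xs :: 'a list. set xs \<subseteq> UNIV \<and> length xs = k}" by (auto simp: words_def)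
  moreover have "finite (UNIV :: 'a set)" by simp
  ultimately show ?thesis using finite_lists_length_eq[of "UNIV :: 'a set" k] by simp
qed

theorem mainTheorem5:
  fixes P :: "'a::finite \<Rightarrow> 'a list pmf" and k :: nat and w :: "'a list"
  assumes "mutation_law P"
    and "1 \<le> k"
    and "k \<le> length w"
  shows "\<forall>u \<in> words k.
           measure_pmf.expectation (mutate P w) (\<lambda>x. real (ct x u))
           = (1 / real (length w)) *
             (\<Sum>v\<in>words k. (subst_matrix P k u v
                 + (real (length w) - real k) * (if u = v then 1 else 0)) * real (ct w v))"
proof
  fix u :: "'a list" assume "u \<in> words k"
  hence lu: "length u = k" by (simp add: words_def)
  note ml = assms(1) and k1 = assms(2) and kn = assms(3)
  define n where "n = length w"
  have n0: "0 < n" unfolding n_def using k1 kn by linarith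
  define V where "V s = cw k w s" for s
  define G where "G j s = (\<Sum>\<eta>\<in>set_pmf (P (V s ! j)). pmf (P (V s ! j)) \<eta> * T k u j (V s) \<eta>)" for j s
  define C where "C = (\<Sum>s<n. of_bool (V s = u) :: real)"
  define A where "A i = (\<Sum>s<n - k. of_bool (V ((s + Suc i) mod n) = u) :: real)" for i
  have fin: "finite (set_pmf (P a))" for a using ml by (simp add: mutation_law_def)
  have ne: "\<eta> \<in> set_pmf (P a) \<Longrightarrow> \<eta> \<noteq> []" for \<eta> a using ml by (auto simp: mutation_law_def)
  have stepA: "(\<Sum>\<eta>\<in>set_pmf (P (w ! i)). pmf (P (w ! i)) \<eta> * real (ct (take i w @ \<eta> @ drop (Suc i) w) u))
      = A i + (\<Sum>j<k. G j ((i + n - j) mod n))" if i: "i < n" for i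
  proof -
    have "(\<Sum>\<eta>\<in>set_pmf (P (w ! i)). pmf (P (w ! i)) \<eta> * real (ct (take i w @ \<eta> @ drop (Suc i) w) u))
      = (\<Sum>\<eta>\<in>set_pmf (P (w ! i)). pmf (P (w ! i)) \<eta> * A i + (\<Sum>j<k. pmf (P (w ! i)) \<eta> * T k u j (V ((i + n - j) mod n)) \<eta>))"
    proof (rule sum.cong[OF refl])
      fix \<eta> assume "\<eta> \<in> set_pmf (P (w ! i))"
      hence "\<eta> \<noteq> []" by (rule ne)
      from per_i[OF i[unfolded n_def] this k1 kn lu]
      show "pmf (P (w ! i)) \<eta> * real (ct (take i w @ \<eta> @ drop (Suc i) w) u)
         = pmf (P (w ! i)) \<eta> * A i + (\<Sum>j<k. pmf (P (w ! i)) \<eta> * T k u j (V ((i + n - j) mod n)) \<eta>)"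
        by (simp add: A_def V_def n_def distrib_left sum_distrib_left)
    qed
    also have "\<dots> = (\<Sum>\<eta>\<in>set_pmf (P (w ! i)). pmf (P (w ! i)) \<eta>) * A i
        + (\<Sum>j<k. \<Sum>\<eta>\<in>set_pmf (P (w ! i)). pmf (P (w ! i)) \<eta> * T k u j (V ((i + n - j) mod n)) \<eta>)"
      by (simp add: sum.distrib sum_distrib_right sum.swap[of _ "set_pmf _"])
    also have "(\<Sum>\<eta>\<in>set_pmf (P (w ! i)). pmf (P (w ! i)) \<eta>) = 1"
      by (rule sum_pmf_eq_1) (auto simp: fin)
    also have "(\<Sum>j<k. \<Sum>\<eta>\<in>set_pmf (P (w ! i)). pmf (P (w ! i)) \<eta> * T k u j (V ((i + n - j) mod n)) \<eta>)
        = (\<Sum>j<k. G j ((i + n - j) mod n))"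
    proof (rule sum.cong[OF refl])
      fix j assume "j \<in> {..<k}"
      hence "V ((i + n - j) mod n) ! j = w ! i" using cw_off[of j k i w] i kn by (simp add: V_def n_def)
      thus "(\<Sum>\<eta>\<in>set_pmf (P (w ! i)). pmf (P (w ! i)) \<eta> * T k u j (V ((i + n - j) mod n)) \<eta>) = G j ((i + n - j) mod n)"
        by (simp add: G_def)
    qed
    finally show ?thesis by simp
  qed
  have stepB: "(\<Sum>i<n. A i) = real (n - k) * C"
  proof -
    have "(\<Sum>i<n. A i) = (\<Sum>s<n - k. \<Sum>i<n. of_bool (V ((i + Suc s) mod n) = u) :: real)"
      unfolding A_def by (subst sum.swap) (simp add: add.commute)
    also have "\<dots> = (\<Sum>s<n - k. C)"
      unfolding C_def by (rule sum.cong[OF refl]) (rule sum_mod_shift[OF n0])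
    finally show ?thesis by simp
  qed
  have stepC: "(\<Sum>i<n. \<Sum>j<k. G j ((i + n - j) mod n)) = (\<Sum>s<n. \<Sum>j<k. G j s)"
  proof -
    have "(\<Sum>i<n. \<Sum>j<k. G j ((i + n - j) mod n)) = (\<Sum>j<k. \<Sum>i<n. G j ((i + (n - j)) mod n))"
      by (subst sum.swap) (rule sum.cong[OF refl], rule sum.cong[OF refl], use kn in \<open>simp add: n_def\<close>)
    also have "\<dots> = (\<Sum>j<k. \<Sum>s<n. G j s)"
      by (rule sum.cong[OF refl]) (rule sum_mod_shift[OF n0])
    also have "\<dots> = (\<Sum>s<n. \<Sum>j<k. G j s)" by (rule sum.swap)
    finally show ?thesis .
  qed
  have LHS: "measure_pmf.expectation (mutate P w) (\<lambda>x. real (ct x u)) = (real (n - k) * C + (\<Sum>s<n. \<Sum>j<k. G j s)) / real n"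
  proof -
    have "measure_pmf.expectation (mutate P w) (\<lambda>x. real (ct x u)) =
      (\<Sum>i\<in>{0..<n}. (\<Sum>\<eta>\<in>set_pmf (P (w ! i)). pmf (P (w ! i)) \<eta> * real (ct (take i w @ \<eta> @ drop (Suc i) w) u)) / real n)"
      using expect[OF ml, of w "\<lambda>x. real (ct x u)"] n0 by (simp add: n_def)
    also have "\<dots> = (\<Sum>i<n. A i + (\<Sum>j<k. G j ((i + n - j) mod n))) / real n"
      by (simp add: atLeast0LessThan stepA sum_divide_distrib)
    also have "\<dots> = (real (n - k) * C + (\<Sum>s<n. \<Sum>j<k. G j s)) / real n"
      by (simp add: sum.distrib stepB stepC)
    finally show ?thesis .
  qed
  define h where "h v = subst_matrix P k u v + (real (length w) - real k) * (if u = v then 1 else 0)" for v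
  have RHS: "(\<Sum>v\<in>words k. h v * real (ct w v)) = (\<Sum>s<n. h (V s))"
  proof -
    have img: "V ` {..<n} \<subseteq> words k" using kn by (auto simp: V_def words_def n_def cw_length)
    have "(\<Sum>v\<in>words k. h v * real (ct w v)) = (\<Sum>v\<in>words k. \<Sum>s\<in>{s \<in> {..<n}. V s = v}. h (V s))"
    proof (rule sum.cong[OF refl])
      fix v :: "'a list" assume "v \<in> words k"
      hence lv: "length v = k" by (simp add: words_def)
      have "ct w v = card {s. s < n \<and> V s = v}"
        using ct_cw[of v w] lv kn by (simp add: V_def n_def)
      also have "{s. s < n \<and> V s = v} = {s \<in> {..<n}. V s = v}" by auto
      finally have "real (ct w v) = real (card {s \<in> {..<n}. V s = v})" by simp
      moreover have "(\<Sum>s\<in>{s \<in> {..<n}. V s = v}. h (V s)) = (\<Sum>s\<in>{s \<in> {..<n}. V s = v}. h v)"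
        by (rule sum.cong) auto
      ultimately show "h v * real (ct w v) = (\<Sum>s\<in>{s \<in> {..<n}. V s = v}. h (V s))" by simp
    qed
    also have "\<dots> = (\<Sum>s<n. h (V s))"
      by (rule sum.group[OF finite_lessThan finite_words img])
    finally show ?thesis .
  qed
  have RHS2: "(\<Sum>s<n. h (V s)) = real (n - k) * C + (\<Sum>s<n. \<Sum>j<k. G j s)"
  proof -
    have "h (V s) = (\<Sum>j<k. G j s) + real (n - k) * of_bool (V s = u)" for s
      unfolding h_def G_def M_eq[OF k1] using kn by (auto simp: n_def of_nat_diff)
    thus ?thesis by (simp add: sum.distrib C_def sum_distrib_left add.commute)
  qed
  show "measure_pmf.expectation (mutate P w) (\<lambda>x. real (ct x u))
           = (1 / real (length w)) *
             (\<Sum>v\<in>words k. (subst_matrix P k u v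
                 + (real (length w) - real k) * (if u = v then 1 else 0)) * real (ct w v))"
    using LHS RHS RHS2 unfolding h_def n_def by simp
qed

end
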